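(* Let $a\geq 3$ be an integer. For $m\geq 1$, the number $A_m$ of right $0$-pyramids of pieces of length $a$ and of size $m$ is $$A_m=\frac{1}{(a-1)m+1}\binom{am}{m}=\frac{(am)!}{m!\,((a-1)m+1)!}.$$
   Context: A piece is an open interval $]s,s+a[$ with $s\in\mathbb Z$; two pieces are concurrent iff their intervals intersect. A heap is a finite configuration obtained by successively dropping pieces vertically towards the horizontal axis, each coming to rest on the axis or on top of the highest previously placed piece whose interval meets its own; configurations (not dropping orders) are counted. A pyramid is a heap with a unique bottom piece (exactly one piece on the axis); its size is its number of pieces. A right $0$-pyramid is a pyramid whose bottom piece covers $]0,a[$ and is a leftmost piece (no piece covers $]t,t+a[$ with $t<0$). *)

theory Defs
  imports Complex_Main
begin

text \<open>A positioned piece is a pair (s, h): the piece covers the open interval ]s, s+a[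
  and lies at level h (h = 0 means resting on the horizontal axis).
  Two pieces ]s,s+a[ and ]t,t+a[ are concurrent iff the intervals meet, i.e. |s - t| < a.\<close>

definition concurrent :: "nat \<Rightarrow> int \<Rightarrow> int \<Rightarrow> bool" where
  "concurrent a s t \<longleftrightarrow> \<bar>s - t\<bar> < int a"

definition drop_level :: "nat \<Rightarrow> (int \<times> nat) set \<Rightarrow> int \<Rightarrow> nat" where
  "drop_level a H s =
     (if \<exists>p\<in>H. concurrent a s (fst p)
      then Suc (Max {snd p | p. p \<in> H \<and> concurrent a s (fst p)})
      else 0)"

inductive heap :: "nat \<Rightarrow> (int \<times> nat) set \<Rightarrow> bool" for a where
  empty: "heap a {}"
| drop: "heap a H \<Longrightarrow> heap a (insert (s, drop_level a H s) H)"

definition pyramid :: "nat \<Rightarrow> (int \<times> nat) set \<Rightarrow> bool" where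
  "pyramid a H \<longleftrightarrow> heap a H \<and> card {p \<in> H. snd p = 0} = 1"

definition right0_pyramid :: "nat \<Rightarrow> (int \<times> nat) set \<Rightarrow> bool" where
  "right0_pyramid a H \<longleftrightarrow> pyramid a H \<and> {p \<in> H. snd p = 0} = {(0, 0)}
      \<and> (\<forall>p\<in>H. 0 \<le> fst p)"

end

theory Submission
  imports Defs
begin


definition proper :: "nat \<Rightarrow> (int \<times> nat) set \<Rightarrow> bool" where
  "proper a S \<longleftrightarrow> (\<forall>p\<in>S. \<forall>q\<in>S. p \<noteq> q \<and> concurrent a (fst p) (fst q) \<longrightarrow> snd p \<noteq> snd q)"

definition hp :: "nat \<Rightarrow> (int \<times> nat) set \<Rightarrow> bool" where
  "hp a H \<longleftrightarrow> finite H \<and> proper a H \<and>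
     (\<forall>p\<in>H. snd p > 0 \<longrightarrow> (\<exists>q\<in>H. concurrent a (fst p) (fst q) \<and> snd q = snd p - 1))"

lemma conc_refl: "a > 0 \<Longrightarrow> concurrent a s s" by (simp add: concurrent_def)
lemma conc_sym: "concurrent a s t = concurrent a t s" by (auto simp: concurrent_def)

lemma dl_alt: "drop_level a H s = (if \<exists>p\<in>H. concurrent a s (fst p)
      then Suc (Max (snd ` {p\<in>H. concurrent a s (fst p)})) else 0)"
proof -
  have "{snd p | p. p \<in> H \<and> concurrent a s (fst p)} = snd ` {p\<in>H. concurrent a s (fst p)}" by blast
  then show ?thesis unfolding drop_level_def by simp
qed

lemma drop_level_gt:
  assumes "finite H" "p \<in> H" "concurrent a s (fst p)"
  shows "snd p < drop_level a H s"
proof -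
  have "snd p \<in> snd ` {p\<in>H. concurrent a s (fst p)}" using assms by auto
  moreover have "finite (snd ` {p\<in>H. concurrent a s (fst p)})" using assms(1) by auto
  ultimately have "snd p \<le> Max (snd ` {p\<in>H. concurrent a s (fst p)})" by (meson Max_ge)
  moreover have "drop_level a H s = Suc (Max (snd ` {p\<in>H. concurrent a s (fst p)}))"
    using assms unfolding dl_alt by auto
  ultimately show ?thesis by simp
qed

lemma heap_hp: assumes "a > 0" "heap a H" shows "hp a H"
  using assms(2)
proof induction
  case empty
  then show ?case by (simp add: hp_def proper_def)
next
  case (drop H s)
  let ?L = "drop_level a H s"
  have fin: "finite H" using drop.IH by (simp add: hp_def)
  have gt: "\<And>p. p \<in> H \<Longrightarrow> concurrent a s (fst p) \<Longrightarrow> snd p < ?L"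
    using drop_level_gt[OF fin] by blast
  have new: "(s, ?L) \<notin> H" using gt[of "(s,?L)"] conc_refl[OF assms(1)] by auto
  have pr: "proper a (insert (s, ?L) H)"
    using drop.IH gt unfolding hp_def proper_def
    by (metis conc_sym fst_conv insert_iff less_irrefl snd_conv)
  have sup: "\<exists>q\<in>insert (s, ?L) H. concurrent a (fst p) (fst q) \<and> snd q = snd p - 1"
    if "p \<in> insert (s, ?L) H" "snd p > 0" for p
  proof (cases "p = (s, ?L)")
    case True
    then have ex: "\<exists>p\<in>H. concurrent a s (fst p)" using that unfolding dl_alt
      by (auto split: if_splits)
    let ?M = "snd ` {p\<in>H. concurrent a s (fst p)}"
    have "finite ?M" "?M \<noteq> {}" using fin ex by auto
    then have "Max ?M \<in> ?M" by (rule Max_in)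
    then obtain q where q: "q \<in> H" "concurrent a s (fst q)" "snd q = Max ?M" by auto
    have "?L = Suc (Max ?M)" using ex unfolding dl_alt by auto
    then show ?thesis using True q by auto
  next
    case False
    then show ?thesis using that drop.IH unfolding hp_def by auto
  qed
  show ?case using pr sup fin unfolding hp_def by auto
qed

lemma hp_heap: assumes "a > 0" "hp a H" shows "heap a H"
proof -
  have "\<And>H. hp a H \<Longrightarrow> card H = n \<Longrightarrow> heap a H" for n
  proof (induction n)
    case 0
    then have "H = {}" by (simp add: hp_def)
    then show ?case by (simp add: heap.empty)
  next
    case (Suc n)
    then have fin: "finite H" and ne: "H \<noteq> {}" by (auto simp: hp_def)
    have "finite (snd ` H)" "snd ` H \<noteq> {}" using fin ne by auto
    then have "Max (snd ` H) \<in> snd ` H" by (rule Max_in)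
    then obtain s h where q: "(s,h) \<in> H" "h = Max (snd ` H)" by force
    have hmax: "\<And>p. p \<in> H \<Longrightarrow> snd p \<le> h" using q fin by simp
    let ?H = "H - {(s,h)}"
    have hp': "hp a ?H"
    proof -
      have "proper a ?H" using Suc.prems unfolding hp_def proper_def by blast
      moreover have "\<exists>q\<in>?H. concurrent a (fst p) (fst q) \<and> snd q = snd p - 1"
        if pp: "p \<in> ?H" "snd p > 0" for p
      proof -
        obtain q where "q \<in> H" "concurrent a (fst p) (fst q)" "snd q = snd p - 1"
          using Suc.prems pp(2) DiffD1[OF pp(1)] unfolding hp_def by blast
        moreover have "snd q < h" using hmax[of p] pp \<open>snd q = snd p - 1\<close> by auto
        ultimately show ?thesis by auto
      qed
      ultimately show ?thesis using fin unfolding hp_def by auto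
    qed
    have "card ?H = n" using Suc.prems q fin by simp
    then have hH: "heap a ?H" using Suc.IH hp' by blast
    have dl: "drop_level a ?H s = h"
    proof (cases "h = 0")
      case True
      have "\<not> (\<exists>p\<in>?H. concurrent a s (fst p))"
      proof
        assume "\<exists>p\<in>?H. concurrent a s (fst p)"
        then obtain p where p: "p \<in> ?H" "concurrent a s (fst p)" by blast
        then have "snd p \<noteq> h" using Suc.prems q unfolding hp_def proper_def
          by (metis DiffD1 DiffD2 fst_conv insertI1 snd_conv)
        then show False using hmax[of p] p True by auto
      qed
      then show ?thesis using True unfolding dl_alt by auto
    next
      case False
      then obtain r where r: "r \<in> H" "concurrent a s (fst r)" "snd r = h - 1"
        using Suc.prems q unfolding hp_def by fastforce
      have rH: "r \<in> ?H" using r False by auto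
      let ?M = "snd ` {p\<in>?H. concurrent a s (fst p)}"
      have lt: "\<And>p. p \<in> ?H \<Longrightarrow> concurrent a s (fst p) \<Longrightarrow> snd p < h"
      proof -
        fix p assume p: "p \<in> ?H" "concurrent a s (fst p)"
        then have "snd p \<noteq> h" using Suc.prems q unfolding hp_def proper_def
          by (metis DiffD1 DiffD2 fst_conv insertI1 snd_conv)
        then show "snd p < h" using hmax[of p] p by auto
      qed
      have "Max ?M = h - 1"
      proof (rule Max_eqI)
        show "finite ?M" using fin by auto
        show "h - 1 \<in> ?M" using rH r by (metis (mono_tags, lifting) image_eqI mem_Collect_eq)
        fix y assume "y \<in> ?M" then show "y \<le> h - 1" using lt by fastforce
      qed
      then show ?thesis using rH r False unfolding dl_alt by auto
    qed
    have "H = insert (s, drop_level a ?H s) ?H" using dl q by auto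
    then show ?case using heap.drop[OF hH, of s] by simp
  qed
  then show ?thesis using assms by blast
qed

lemma heap_iff: "a > 0 \<Longrightarrow> heap a H \<longleftrightarrow> hp a H"
  using heap_hp hp_heap by blast




definition below :: "nat \<Rightarrow> (int \<times> nat) set \<Rightarrow> int \<times> nat \<Rightarrow> (int \<times> nat) set" where
  "below a S p = {q\<in>S. concurrent a (fst p) (fst q) \<and> snd q < snd p}"

function rl :: "nat \<Rightarrow> (int \<times> nat) set \<Rightarrow> int \<times> nat \<Rightarrow> nat" where
  "rl a S p = (if below a S p = {} then 0 else Suc (Max (rl a S ` below a S p)))"
  by auto
termination
  by (relation "measure (\<lambda>(a,S,p). snd p)") (auto simp: below_def)

declare rl.simps[simp del]

lemma rl_mono:
  assumes "finite S" "q \<in> below a S p" shows "rl a S q < rl a S p"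
proof -
  have "finite (rl a S ` below a S p)" using assms(1) by (simp add: below_def)
  then have "rl a S q \<le> Max (rl a S ` below a S p)" using assms(2) by (meson Max_ge imageI)
  then show ?thesis using assms(2) by (subst (2) rl.simps) auto
qed

lemma rl_sup:
  assumes "finite S" "rl a S p > 0"
  shows "\<exists>q \<in> below a S p. rl a S q = rl a S p - 1"
proof -
  have ne: "below a S p \<noteq> {}" using assms(2) by (subst (asm) rl.simps) (auto split: if_splits)
  have "finite (rl a S ` below a S p)" using assms(1) by (simp add: below_def)
  then have "Max (rl a S ` below a S p) \<in> rl a S ` below a S p" using ne by (intro Max_in) auto
  then obtain q where q: "q \<in> below a S p" "rl a S q = Max (rl a S ` below a S p)" by auto
  have "rl a S p = Suc (Max (rl a S ` below a S p))" using ne by (subst rl.simps) auto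
  then show ?thesis using q by auto
qed

lemma rl_zero: "below a S p = {} \<Longrightarrow> rl a S p = 0"
  by (subst rl.simps) auto

lemma rl_zero_iff: "finite S \<Longrightarrow> rl a S p = 0 \<longleftrightarrow> below a S p = {}"
  using rl_mono by (metis all_not_in_conv not_less0 rl_zero)

lemma rl_heap:
  assumes "hp a H" "p \<in> H" shows "rl a H p = snd p"
  using assms(2)
proof (induction "snd p" arbitrary: p rule: less_induct)
  case less
  have fin: "finite H" using assms by (simp add: hp_def)
  show ?case
  proof (cases "snd p = 0")
    case True
    then have "below a H p = {}" by (auto simp: below_def)
    then show ?thesis using True rl_zero by simp
  next
    case False
    then obtain q where q: "q \<in> H" "concurrent a (fst p) (fst q)" "snd q = snd p - 1"
      using assms less.prems unfolding hp_def by blast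
    have qb: "q \<in> below a H p" using q False by (auto simp: below_def)
    have eq: "rl a H ` below a H p = snd ` below a H p"
      using less.hyps by (auto simp: below_def intro!: image_cong)
    have "Max (snd ` below a H p) = snd p - 1"
    proof (rule Max_eqI)
      show "finite (snd ` below a H p)" using fin by (simp add: below_def)
      show "snd p - 1 \<in> snd ` below a H p" using qb q(3) by (metis image_eqI)
      fix y assume "y \<in> snd ` below a H p" then show "y \<le> snd p - 1" by (auto simp: below_def)
    qed
    then show ?thesis using qb eq False by (subst rl.simps) auto
  qed
qed

lemma rl_iso:
  assumes bij: "bij_betw \<phi> S T"
    and fstp: "\<And>p. p \<in> S \<Longrightarrow> fst (\<phi> p) = fst p"
    and ord: "\<And>p q. p \<in> S \<Longrightarrow> q \<in> S \<Longrightarrow> concurrent a (fst p) (fst q) \<Longrightarrow>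
                 snd q < snd p \<longleftrightarrow> snd (\<phi> q) < snd (\<phi> p)"
    and p: "p \<in> S"
  shows "rl a T (\<phi> p) = rl a S p"
  using p
proof (induction "snd p" arbitrary: p rule: less_induct)
  case less
  have bT: "below a T (\<phi> p) = \<phi> ` below a S p"
  proof
    show "below a T (\<phi> p) \<subseteq> \<phi> ` below a S p"
    proof
      fix q' assume q': "q' \<in> below a T (\<phi> p)"
      then obtain q where q: "q \<in> S" "q' = \<phi> q" using bij by (auto simp: below_def bij_betw_def)
      then show "q' \<in> \<phi> ` below a S p" using q' ord[OF less.prems q(1)] fstp[OF q(1)] fstp[OF less.prems]
        by (auto simp: below_def)
    qed
    show "\<phi> ` below a S p \<subseteq> below a T (\<phi> p)"
      using ord[OF less.prems] fstp less.prems bij by (auto simp: below_def bij_betw_def)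
  qed
  have "rl a T ` below a T (\<phi> p) = rl a S ` below a S p"
    unfolding bT image_image using less.hyps by (auto simp: below_def intro!: image_cong)
  then show ?case using bT by (subst (1 2) rl.simps) auto
qed

definition psi :: "nat \<Rightarrow> (int \<times> nat) set \<Rightarrow> int \<times> nat \<Rightarrow> int \<times> nat" where
  "psi a S p = (fst p, rl a S p)"

definition relevel :: "nat \<Rightarrow> (int \<times> nat) set \<Rightarrow> (int \<times> nat) set" where
  "relevel a S = psi a S ` S"

lemma proper_ord:
  assumes "finite S" "proper a S" "p \<in> S" "q \<in> S" "concurrent a (fst p) (fst q)"
  shows "snd q < snd p \<longleftrightarrow> rl a S q < rl a S p"
proof
  assume "snd q < snd p" then show "rl a S q < rl a S p"
    using assms by (intro rl_mono) (auto simp: below_def conc_sym)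
next
  assume r: "rl a S q < rl a S p"
  show "snd q < snd p"
  proof (rule ccontr)
    assume "\<not> snd q < snd p"
    moreover have "p \<noteq> q" using r by auto
    ultimately have "snd p < snd q" using assms unfolding proper_def by (metis nat_neq_iff)
    then have "rl a S p < rl a S q" using assms by (intro rl_mono) (auto simp: below_def conc_sym)
    then show False using r by simp
  qed
qed

lemma psi_inj:
  assumes "a > 0" "finite S" "proper a S" shows "inj_on (psi a S) S"
proof (rule inj_onI)
  fix p q assume pq: "p \<in> S" "q \<in> S" "psi a S p = psi a S q"
  show "p = q"
  proof (rule ccontr)
    assume ne: "p \<noteq> q"
    have f: "fst p = fst q" and r: "rl a S p = rl a S q" using pq by (auto simp: psi_def)
    have c: "concurrent a (fst p) (fst q)" using f conc_refl[OF assms(1)] by simp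
    then have "snd p \<noteq> snd q" using ne pq assms(3) unfolding proper_def by blast
    then show False using proper_ord[OF assms(2,3) pq(1,2) c] proper_ord[OF assms(2,3) pq(2,1)] c r
      by (metis conc_sym nat_neq_iff)
  qed
qed

lemma relevel_hp:
  assumes "a > 0" "finite S" "proper a S" shows "hp a (relevel a S)"
proof -
  have "finite (relevel a S)" using assms by (simp add: relevel_def)
  moreover have "proper a (relevel a S)"
    unfolding proper_def relevel_def
  proof (intro ballI impI)
    fix p' q' assume p': "p' \<in> psi a S ` S" and q': "q' \<in> psi a S ` S"
      and h: "p' \<noteq> q' \<and> concurrent a (fst p') (fst q')"
    obtain p q where pq: "p \<in> S" "q \<in> S" "p' = psi a S p" "q' = psi a S q" using p' q' by auto
    have "p \<noteq> q" "concurrent a (fst p) (fst q)" using h pq by (auto simp: psi_def)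
    then have "snd p \<noteq> snd q" using assms(3) pq unfolding proper_def by blast
    then show "snd p' \<noteq> snd q'"
      using proper_ord[OF assms(2,3) pq(1,2)] proper_ord[OF assms(2,3) pq(2,1)]
        \<open>concurrent a (fst p) (fst q)\<close> pq
      by (metis conc_sym nat_neq_iff psi_def snd_conv)
  qed
  moreover have "\<exists>q'\<in>relevel a S. concurrent a (fst p') (fst q') \<and> snd q' = snd p' - 1"
    if tp: "p' \<in> relevel a S" "snd p' > 0" for p'
  proof -
    obtain p where p: "p \<in> S" "p' = psi a S p" using tp(1) unfolding relevel_def by blast
    then have "rl a S p > 0" using tp by (simp add: psi_def)
    then obtain q where q: "q \<in> below a S p" "rl a S q = rl a S p - 1" using rl_sup assms(2) by blast
    show ?thesis
      using q p by (intro bexI[of _ "psi a S q"]) (auto simp: psi_def below_def relevel_def)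
  qed
  ultimately show ?thesis unfolding hp_def by blast
qed

lemma card_relevel:
  assumes "a > 0" "finite S" "proper a S" shows "card (relevel a S) = card S"
  using psi_inj[OF assms] by (simp add: relevel_def card_image)

lemma relevel_heap: assumes "hp a H" shows "relevel a H = H"
proof -
  have "psi a H p = p" if "p \<in> H" for p using rl_heap[OF assms that] by (simp add: psi_def)
  then show ?thesis unfolding relevel_def by simp
qed




definition P :: "nat \<Rightarrow> nat \<Rightarrow> nat \<Rightarrow> (int \<times> nat) set set" where
  "P a j m = {H. hp a H \<and> card H = m \<and> (\<forall>p\<in>H. 0 \<le> fst p) \<and> (\<forall>p\<in>H. snd p = 0 \<longrightarrow> fst p < int j)}"

definition D :: "nat \<Rightarrow> nat \<Rightarrow> nat \<Rightarrow> (int \<times> nat) set set" where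
  "D a j m = {H \<in> P a j m. (int j - 1, 0) \<in> H}"

definition shift :: "(int \<times> nat) set \<Rightarrow> (int \<times> nat) set" where
  "shift H = (\<lambda>p. (fst p, Suc (snd p))) ` H"

definition F :: "nat \<Rightarrow> nat \<Rightarrow> (int \<times> nat) set \<Rightarrow> (int \<times> nat) set" where
  "F a j H = relevel a (H - {(int j - 1, 0)})"

definition G :: "nat \<Rightarrow> nat \<Rightarrow> (int \<times> nat) set \<Rightarrow> (int \<times> nat) set" where
  "G a j H = relevel a (insert (int j - 1, 0) (shift H))"

lemma proper_subset: "proper a H \<Longrightarrow> S \<subseteq> H \<Longrightarrow> proper a S"
  unfolding proper_def by blast

lemma proper_T0:
  assumes "proper a H" shows "proper a (insert (c, 0) (shift H))"
  using assms unfolding proper_def shift_def by auto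

lemma c_notin_shift: "(c, 0) \<notin> shift H" by (auto simp: shift_def)

lemma shift_inj: "inj_on (\<lambda>p. (fst p, Suc (snd p))) H"
  by (rule inj_onI) (auto simp: prod_eq_iff)

lemma GF:
  assumes a: "a > 0" and H: "H \<in> D a j (Suc m)"
  shows "G a j (F a j H) = H"
proof -
  let ?c = "(int j - 1, 0::nat)"
  have hpH: "hp a H" and cH: "?c \<in> H" using H by (auto simp: D_def P_def)
  have finH: "finite H" and prH: "proper a H" using hpH by (auto simp: hp_def)
  let ?S = "H - {?c}"
  have finS: "finite ?S" and prS: "proper a ?S" using finH prH proper_subset by auto
  let ?T = "insert ?c (shift (relevel a ?S))"
  define \<phi> where "\<phi> p = (if p = ?c then ?c else (fst p, Suc (rl a ?S p)))" for p
  have inj: "inj_on \<phi> H"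
  proof (rule inj_onI)
    fix p q assume pq: "p \<in> H" "q \<in> H" "\<phi> p = \<phi> q"
    show "p = q"
    proof (cases "p = ?c \<or> q = ?c")
      case True then show ?thesis using pq by (auto simp: \<phi>_def split: if_splits)
    next
      case False
      then have "psi a ?S p = psi a ?S q" using pq by (auto simp: \<phi>_def psi_def)
      then show ?thesis using psi_inj[OF a finS prS] pq False by (auto dest: inj_onD)
    qed
  qed
  have img: "\<phi> ` H = ?T"
  proof -
    have "H = insert ?c ?S" using cH by auto
    then have "\<phi> ` H = insert ?c (\<phi> ` ?S)" by (auto simp: \<phi>_def)
    moreover have "\<phi> ` ?S = shift (relevel a ?S)"
      unfolding shift_def relevel_def image_image by (auto simp: \<phi>_def psi_def)
    ultimately show ?thesis by simp
  qed
  have bij: "bij_betw \<phi> H ?T" using inj img by (simp add: bij_betw_def)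
  have fstp: "fst (\<phi> p) = fst p" if "p \<in> H" for p using that by (auto simp: \<phi>_def)
  have ord: "snd q < snd p \<longleftrightarrow> snd (\<phi> q) < snd (\<phi> p)"
    if pq: "p \<in> H" "q \<in> H" "concurrent a (fst p) (fst q)" for p q
  proof (cases "p = ?c")
    case True
    then show ?thesis by (auto simp: \<phi>_def)
  next
    case pc: False
    show ?thesis
    proof (cases "q = ?c")
      case True
      have "snd p \<noteq> 0" using prH pq pc True unfolding proper_def by (metis snd_conv)
      then show ?thesis using True pc by (auto simp: \<phi>_def)
    next
      case False
      then show ?thesis using proper_ord[OF finS prS, of p q] pq pc by (auto simp: \<phi>_def)
    qed
  qed
  have rlT: "rl a ?T (\<phi> p) = snd p" if "p \<in> H" for p
    using rl_iso[OF bij fstp ord that] rl_heap[OF hpH that] by simp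
  have "G a j (F a j H) = relevel a ?T" by (simp add: G_def F_def)
  also have "\<dots> = psi a ?T ` \<phi> ` H" unfolding relevel_def img ..
  also have "\<dots> = H" unfolding image_image using rlT fstp by (simp add: psi_def)
  finally show ?thesis .
qed

lemma psi_c:
  assumes "finite H" shows "psi a (insert (c,0) (shift H)) (c,0) = (c,0)"
proof -
  have "below a (insert (c,0) (shift H)) (c,0) = {}" by (auto simp: below_def)
  then show ?thesis by (simp add: psi_def rl_zero)
qed

lemma FG:
  assumes a: "a > 0" and H': "H' \<in> P a (j + a - 1) m"
  shows "F a j (G a j H') = H'"
proof -
  let ?c = "(int j - 1, 0::nat)"
  have hpH: "hp a H'" using H' by (auto simp: P_def)
  have finH: "finite H'" and prH: "proper a H'" using hpH by (auto simp: hp_def)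
  let ?T = "insert ?c (shift H')"
  have finT: "finite ?T" using finH by (simp add: shift_def)
  have prT: "proper a ?T" using proper_T0[OF prH] .
  have injT: "inj_on (psi a ?T) ?T" using psi_inj[OF a finT prT] .
  let ?K = "relevel a ?T"
  have Kc: "?K - {?c} = psi a ?T ` shift H'"
  proof -
    have "?K = insert ?c (psi a ?T ` shift H')"
      unfolding relevel_def using psi_c[OF finH] by simp
    moreover have "?c \<notin> psi a ?T ` shift H'"
    proof
      assume "?c \<in> psi a ?T ` shift H'"
      then obtain x where x: "x \<in> shift H'" "psi a ?T x = ?c" by auto
      then have "psi a ?T x = psi a ?T ?c" using psi_c[OF finH] by simp
      then have "x = ?c" using inj_onD[OF injT] x(1) by blast
      then show False using x(1) c_notin_shift by blast
    qed
    ultimately show ?thesis by auto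
  qed
  define \<phi> where "\<phi> p = psi a ?T (fst p, Suc (snd p))" for p
  have inj: "inj_on \<phi> H'"
  proof (rule inj_onI)
    fix p q assume pq: "p \<in> H'" "q \<in> H'" "\<phi> p = \<phi> q"
    have "(fst p, Suc (snd p)) \<in> ?T" "(fst q, Suc (snd q)) \<in> ?T" using pq by (auto simp: shift_def)
    then have "(fst p, Suc (snd p)) = (fst q, Suc (snd q))"
      using pq(3) injT unfolding \<phi>_def by (auto dest: inj_onD)
    then show "p = q" by (simp add: prod_eq_iff)
  qed
  have "\<phi> ` H' = psi a ?T ` shift H'" by (simp add: shift_def image_image \<phi>_def)
  then have img: "\<phi> ` H' = ?K - {?c}" using Kc by simp
  have bij: "bij_betw \<phi> H' (?K - {?c})" using inj img by (simp add: bij_betw_def)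
  have fstp: "fst (\<phi> p) = fst p" if "p \<in> H'" for p by (simp add: \<phi>_def psi_def)
  have ord: "snd q < snd p \<longleftrightarrow> snd (\<phi> q) < snd (\<phi> p)"
    if pq: "p \<in> H'" "q \<in> H'" "concurrent a (fst p) (fst q)" for p q
  proof -
    have "(fst p, Suc (snd p)) \<in> ?T" "(fst q, Suc (snd q)) \<in> ?T" using pq by (auto simp: shift_def)
    then show ?thesis using proper_ord[OF finT prT, of "(fst p, Suc (snd p))" "(fst q, Suc (snd q))"] pq
      by (simp add: \<phi>_def psi_def)
  qed
  have rlK: "rl a (?K - {?c}) (\<phi> p) = snd p" if "p \<in> H'" for p
    using rl_iso[OF bij fstp ord that] rl_heap[OF hpH that] by simp
  have "F a j (G a j H') = relevel a (?K - {?c})" by (simp add: G_def F_def)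
  also have "\<dots> = psi a (?K - {?c}) ` \<phi> ` H'" unfolding relevel_def img ..
  also have "\<dots> = H'" unfolding image_image using rlK fstp by (simp add: psi_def)
  finally show ?thesis .
qed

lemma F_mem:
  assumes a: "a > 0" and j: "j \<ge> 1" and H: "H \<in> D a j (Suc m)"
  shows "F a j H \<in> P a (j + a - 1) m"
proof -
  let ?c = "(int j - 1, 0::nat)"
  have hpH: "hp a H" and cH: "?c \<in> H" using H by (auto simp: D_def P_def)
  have finH: "finite H" and prH: "proper a H" using hpH by (auto simp: hp_def)
  let ?S = "H - {?c}"
  have finS: "finite ?S" and prS: "proper a ?S" using finH prH proper_subset by auto
  have "hp a (F a j H)" unfolding F_def using relevel_hp[OF a finS prS] .
  moreover have "card (F a j H) = m" unfolding F_def using card_relevel[OF a finS prS] H cH finH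
    by (simp add: D_def P_def)
  moreover have "\<forall>p\<in>F a j H. 0 \<le> fst p" using H by (auto simp: F_def relevel_def psi_def D_def P_def)
  moreover have "fst p' < int (j + a - 1)" if p': "p' \<in> F a j H" "snd p' = 0" for p'
  proof -
    obtain p where p: "p \<in> ?S" "p' = psi a ?S p" using p'(1) unfolding F_def relevel_def by blast
    have bl: "below a ?S p = {}" using p p'(2) rl_zero_iff[OF finS] by (simp add: psi_def)
    have "fst p < int j + int a - 1"
    proof (cases "snd p = 0")
      case True then show ?thesis using H p a by (auto simp: D_def P_def)
    next
      case False
      then obtain q where q: "q \<in> H" "concurrent a (fst p) (fst q)" "snd q = snd p - 1"
        using hpH p unfolding hp_def by blast
      have "q \<notin> below a ?S p" using bl by simp
      then have "q \<notin> ?S" using q False by (auto simp: below_def)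
      then have "q = ?c" using q(1) by blast
      then show ?thesis using q(2) by (auto simp: concurrent_def)
    qed
    then show ?thesis using p j by (simp add: psi_def)
  qed
  ultimately show ?thesis unfolding P_def by blast
qed

lemma G_mem:
  assumes a: "a > 0" and j: "j \<ge> 1" and H': "H' \<in> P a (j + a - 1) m"
  shows "G a j H' \<in> D a j (Suc m)"
proof -
  let ?c = "(int j - 1, 0::nat)"
  have hpH: "hp a H'" using H' by (auto simp: P_def)
  have finH: "finite H'" and prH: "proper a H'" using hpH by (auto simp: hp_def)
  let ?T = "insert ?c (shift H')"
  have finT: "finite ?T" using finH by (simp add: shift_def)
  have prT: "proper a ?T" using proper_T0[OF prH] .
  have "hp a (G a j H')" unfolding G_def using relevel_hp[OF a finT prT] .
  moreover have "card (G a j H') = Suc m"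
  proof -
    have "card (shift H') = card H'" unfolding shift_def by (rule card_image[OF shift_inj])
    then have "card (shift H') = m" using H' by (simp add: P_def)
    then have "card ?T = Suc m" using c_notin_shift finH by (simp add: shift_def)
    then show ?thesis unfolding G_def using card_relevel[OF a finT prT] by simp
  qed
  moreover have "\<forall>p\<in>G a j H'. 0 \<le> fst p" using H' j
    by (auto simp: G_def relevel_def psi_def P_def shift_def)
  moreover have "fst p' < int j" if p': "p' \<in> G a j H'" "snd p' = 0" for p'
  proof -
    obtain p where p: "p \<in> ?T" "p' = psi a ?T p" using p'(1) unfolding G_def relevel_def by blast
    have bl: "below a ?T p = {}" using p p'(2) rl_zero_iff[OF finT] by (simp add: psi_def)
    show ?thesis
    proof (cases "p = ?c")
      case True then show ?thesis using p by (simp add: psi_def)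
    next
      case False
      then have "p \<in> shift H'" using p(1) by simp
      then obtain x where x: "x \<in> H'" "p = (fst x, Suc (snd x))" unfolding shift_def by blast
      obtain s h where "x = (s, h)" by (cases x)
      then have sh: "(s, h) \<in> H'" "p = (s, Suc h)" using x by auto
      have nc: "\<not> concurrent a s (int j - 1)" using bl sh by (auto simp: below_def)
      have h0: "h = 0"
      proof (rule ccontr)
        assume "h \<noteq> 0"
        then obtain q where q: "q \<in> H'" "concurrent a s (fst q)" "snd q = h - 1"
          using hpH sh unfolding hp_def by fastforce
        have "(fst q, Suc (snd q)) \<in> below a ?T p"
          using q sh \<open>h \<noteq> 0\<close> by (auto simp: below_def shift_def)
        then show False using bl by simp
      qed
      have "s < int (j + a - 1)" using H' sh h0 by (auto simp: P_def)
      then have "s < int j" using nc j by (auto simp: concurrent_def)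
      then show ?thesis using p sh by (simp add: psi_def)
    qed
  qed
  moreover have "?c \<in> G a j H'"
    unfolding G_def relevel_def using psi_c[OF finH] by (metis insertI1 image_eqI)
  ultimately show ?thesis unfolding D_def P_def by blast
qed

lemma bij_GD:
  assumes a: "a > 0" and j: "j \<ge> 1"
  shows "bij_betw (G a j) (P a (j + a - 1) m) (D a j (Suc m))"
  by (rule bij_betw_byWitness[where f' = "F a j"])
     (use FG GF F_mem G_mem a j in auto)




definition cf :: "nat \<Rightarrow> nat \<Rightarrow> nat \<Rightarrow> real" where
  "cf a j m = (if j = 0 then (if m = 0 then 1 else 0)
     else real j * fact (a*m+j-1) / (fact m * fact ((a-1)*m+j)))"

lemma cf_0: "j > 0 \<Longrightarrow> cf a j 0 = 1"
proof -
  assume "j > 0"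
  then obtain i where "j = Suc i" by (cases j) auto
  have "fact i > (0::real)" by simp
  then have "fact i + fact i * real i \<noteq> 0" by (metis add_pos_nonneg less_irrefl mult_nonneg_nonneg of_nat_0_le_iff order_less_le)
  then show ?thesis using \<open>j = Suc i\<close> by (simp add: cf_def field_simps)
qed

lemma cf_rec:
  assumes "a > 0"
  shows "cf a (Suc j) (Suc m) = cf a j (Suc m) + cf a (j + a) m"
proof -
  obtain b where a: "a = Suc b" using assms by (cases a) auto
  show ?thesis
  proof (cases j)
    case 0
    define B where "B = Suc b * m + b"
    define E where "E = b * m + b"
    have e1: "a * Suc m + Suc 0 - 1 = Suc B" by (simp add: a B_def)
    have e2: "(a - 1) * Suc m + Suc 0 = Suc E" by (simp add: a E_def)
    have e3: "a * m + (0 + a) - 1 = B" by (simp add: a B_def)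
    have e4: "(a - 1) * m + (0 + a) = Suc E" by (simp add: a E_def)
    have eB: "real (Suc B) = real a * real (Suc m)" by (simp add: a B_def algebra_simps)
    show ?thesis unfolding cf_def using 0 a
      apply (simp only: e1 e2 e3 e4 if_False if_True nat.distinct simp_thms add_0 Suc_eq_plus1[symmetric])
      apply (simp add: fact_Suc eB field_simps del: of_nat_Suc)
      apply (simp add: algebra_simps)
      done
  next
    case (Suc i)
    define B where "B = Suc b * m + Suc b + i"
    define E where "E = b * m + b + i + 1"
    have e1: "a * Suc m + Suc (Suc i) - 1 = Suc B" by (simp add: a B_def)
    have e2: "(a - 1) * Suc m + Suc (Suc i) = Suc E" by (simp add: a E_def)
    have e3: "a * Suc m + Suc i - 1 = B" by (simp add: a B_def)
    have e4: "(a - 1) * Suc m + Suc i = E" by (simp add: a E_def)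
    have e5: "a * m + Suc (i + a) - 1 = B" by (simp add: a B_def)
    have e6: "(a - 1) * m + Suc (i + a) = Suc E" by (simp add: a E_def)
    have c1: "cf a (Suc (Suc i)) (Suc m) = real (Suc (Suc i)) * fact (Suc B) / (fact (Suc m) * fact (Suc E))"
      unfolding cf_def by (simp only: e1 e2 nat.distinct if_False)
    have c2: "cf a (Suc i) (Suc m) = real (Suc i) * fact B / (fact (Suc m) * fact E)"
      unfolding cf_def by (simp only: e3 e4 nat.distinct if_False)
    have c3: "cf a (Suc i + a) m = real (Suc (i + a)) * fact B / (fact m * fact (Suc E))"
      unfolding cf_def add_Suc by (simp only: e5 e6 nat.distinct if_False)
    have id: "(real i + 2) * (real B + 1) = (real i + 1) * (real E + 1) + (real i + 1 + real a) * (real m + 1)"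
      by (simp add: a B_def E_def algebra_simps)
    have Z: "fact B > (0::real)" "fact E > (0::real)" "fact m > (0::real)" by auto
    have "real (Suc (Suc i)) * fact (Suc B) / (fact (Suc m) * fact (Suc E)) =
          real (Suc i) * fact B / (fact (Suc m) * fact E) + real (Suc (i + a)) * fact B / (fact m * fact (Suc E))"
      using Z id by (simp add: fact_Suc field_simps del: of_nat_Suc) (simp add: algebra_simps)
    then show ?thesis using c1 c2 c3 Suc by simp
  qed
qed




lemma hp_level0:
  assumes "hp a H" "H \<noteq> {}" shows "\<exists>p\<in>H. snd p = 0"
proof -
  have fin: "finite H" using assms by (simp add: hp_def)
  have "Min (snd ` H) \<in> snd ` H" using fin assms(2) by (intro Min_in) auto
  then obtain p where p: "p \<in> H" "snd p = Min (snd ` H)" by auto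
  show ?thesis
  proof (cases "snd p = 0")
    case False
    then obtain q where "q \<in> H" "snd q = snd p - 1" using assms(1) p unfolding hp_def by blast
    moreover have "snd p \<le> snd q" using p fin \<open>q \<in> H\<close> by simp
    ultimately show ?thesis using False by simp
  qed (use p in auto)
qed

lemma P_0: "P a j 0 = {{}}"
  by (auto simp: P_def hp_def proper_def)

lemma P_empty: "P a 0 (Suc m) = {}"
proof -
  have False if "H \<in> P a 0 (Suc m)" for H
  proof -
    have "H \<noteq> {}" "hp a H" using that by (auto simp: P_def)
    then obtain p where "p \<in> H" "snd p = 0" using hp_level0 by blast
    then show False using that by (force simp: P_def)
  qed
  then show ?thesis by blast
qed

lemma P_split: "P a (Suc j) m = P a j m \<union> D a (Suc j) m"
proof
  show "P a (Suc j) m \<subseteq> P a j m \<union> D a (Suc j) m"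
  proof
    fix H assume H: "H \<in> P a (Suc j) m"
    show "H \<in> P a j m \<union> D a (Suc j) m"
    proof (cases "(int j, 0) \<in> H")
      case True then show ?thesis using H by (simp add: D_def)
    next
      case False
      have "fst p < int j" if "p \<in> H" "snd p = 0" for p
      proof -
        have "fst p < int j + 1" using H that by (auto simp: P_def)
        moreover have "p \<noteq> (int j, 0)" using False that by auto
        ultimately show ?thesis using that by (cases p) auto
      qed
      then show ?thesis using H by (auto simp: P_def)
    qed
  qed
  show "P a j m \<union> D a (Suc j) m \<subseteq> P a (Suc j) m" by (auto simp: P_def D_def)
qed

lemma P_disj: "P a j m \<inter> D a (Suc j) m = {}"
  by (force simp: P_def D_def)

lemma count:
  assumes a: "a > 0"
  shows "finite (P a j m) \<and> real (card (P a j m)) = cf a j m"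
proof (induction m arbitrary: j)
  case 0
  show ?case
  proof (cases "j = 0")
    case True then show ?thesis by (simp add: P_0 cf_def)
  next
    case False then show ?thesis by (simp add: P_0 cf_0)
  qed
next
  case (Suc m)
  note IHm = Suc.IH
  show ?case
  proof (induction j)
    case 0
    then show ?case by (simp add: P_empty cf_def)
  next
    case (Suc j)
    have bij: "bij_betw (G a (Suc j)) (P a (Suc j + a - 1) m) (D a (Suc j) (Suc m))"
      using bij_GD[OF a, of "Suc j" m] by simp
    have idx: "Suc j + a - 1 = j + a" using a by simp
    have finD: "finite (D a (Suc j) (Suc m))" and cD: "card (D a (Suc j) (Suc m)) = card (P a (j + a) m)"
      using bij IHm[of "j + a"] bij_betw_finite bij_betw_same_card unfolding idx by metis+
    have "card (P a (Suc j) (Suc m)) = card (P a j (Suc m)) + card (D a (Suc j) (Suc m))"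
      unfolding P_split using Suc.IH finD P_disj by (intro card_Un_disjoint) auto
    then have "real (card (P a (Suc j) (Suc m))) = cf a j (Suc m) + cf a (j + a) m"
      using IHm[of "j+a"] Suc.IH cD by simp
    then show ?case using cf_rec[OF a] Suc.IH finD P_split
      by (simp add: P_split)
  qed
qed




lemma r0_eq:
  assumes a: "a > 0"
  shows "{H. right0_pyramid a H \<and> card H = m} = D a 1 m"
proof -
  have "right0_pyramid a H \<and> card H = m \<longleftrightarrow> H \<in> D a 1 m" for H
  proof
    assume h: "right0_pyramid a H \<and> card H = m"
    then have hp: "hp a H" using heap_iff[OF a] by (simp add: right0_pyramid_def pyramid_def)
    have L: "{p \<in> H. snd p = 0} = {(0, 0)}" using h by (simp add: right0_pyramid_def)
    have "fst p < 1" if "p \<in> H" "snd p = 0" for p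
    proof -
      have "p \<in> {p \<in> H. snd p = 0}" using that by simp
      then show ?thesis using L by simp
    qed
    moreover have "(0,0) \<in> H" using L by blast
    ultimately show "H \<in> D a 1 m" using h hp by (simp add: D_def P_def right0_pyramid_def)
  next
    assume H: "H \<in> D a 1 m"
    then have hp: "hp a H" and c: "(0,0) \<in> H" by (auto simp: D_def P_def)
    have L: "{p \<in> H. snd p = 0} = {(0, 0)}"
    proof
      show "{p \<in> H. snd p = 0} \<subseteq> {(0, 0)}"
      proof
        fix p assume p: "p \<in> {p \<in> H. snd p = 0}"
        then have "fst p < 1" "0 \<le> fst p" using H by (auto simp: D_def P_def)
        then show "p \<in> {(0,0)}" using p by (cases p) auto
      qed
    qed (use c in auto)
    show "right0_pyramid a H \<and> card H = m"
      using H hp L heap_iff[OF a] by (simp add: right0_pyramid_def pyramid_def D_def P_def)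
  qed
  then show ?thesis by blast
qed

theorem corollary1:
  fixes a m :: nat
  assumes "a \<ge> 3" and "m \<ge> 1"
  shows "real (card {H. right0_pyramid a H \<and> card H = m})
           = real ((a * m) choose m) / real ((a - 1) * m + 1)
       \<and> real (card {H. right0_pyramid a H \<and> card H = m})
           = fact (a * m) / (fact m * fact ((a - 1) * m + 1))"
proof -
  have a: "a > 0" using assms by simp
  obtain k where m: "m = Suc k" using assms by (cases m) auto
  obtain b where b: "a = Suc b" using a by (cases a) auto
  have "bij_betw (G a 1) (P a (1 + a - 1) k) (D a 1 (Suc k))" using bij_GD[OF a, of 1 k] by simp
  then have "card (D a 1 (Suc k)) = card (P a a k)" by (simp add: bij_betw_same_card)
  then have c: "real (card {H. right0_pyramid a H \<and> card H = m}) = cf a a k"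
    using count[OF a, of a k] r0_eq[OF a] m by simp
  define N where "N = a * k + b"
  define X where "X = b * k + b"
  have e1: "a * k + a - 1 = N" by (simp add: N_def b)
  have e2: "(a - 1) * k + a = Suc X" by (simp add: X_def b)
  have e3: "a * m = Suc N" by (simp add: N_def b m)
  have e4: "(a - 1) * m + 1 = Suc X" by (simp add: X_def b m)
  have e5: "a * m - m = X" by (simp add: X_def b m)
  have cfv: "cf a a k = real a * fact N / (fact k * fact (Suc X))"
  proof -
    have "a \<noteq> 0" using a by simp
    then show ?thesis unfolding cf_def by (simp only: e1 e2 if_False simp_thms)
  qed
  have t2: "(fact (a * m) :: real) / (fact m * fact ((a - 1) * m + 1)) = cf a a k"
  proof -
    have s: "real (Suc N) = real a * real m" by (simp add: e3[symmetric])
    have fm: "(fact m :: real) = real m * fact k" using m by simp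
    have fN: "(fact (Suc N) :: real) = real a * real m * fact N" using s by (simp del: of_nat_Suc)
    have "real m > 0" using m by simp
    then show ?thesis unfolding cfv e3 e4 fm fN by (simp add: field_simps del: fact_Suc)
  qed
  have t1: "real ((a * m) choose m) / real ((a - 1) * m + 1) = fact (a * m) / (fact m * fact ((a - 1) * m + 1))"
  proof -
    have le: "m \<le> a * m" using a by simp
    have "real ((a * m) choose m) = fact (a * m) / (fact m * fact X)"
      using binomial_fact[OF le] e5 by simp
    then show ?thesis unfolding e4 by (simp add: fact_Suc field_simps del: of_nat_Suc)
  qed
  show ?thesis using c t1 t2 by simp
qed


end
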